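(* Let $\ell\ge 3$ be an integer and let $G$ be a finite graph containing no cycle of length $\ell$ as a subgraph. Then \[ t(G)\le \frac{1}{3}(\ell-3)\,e(G), \] where $e(G)$ is the number of edges of $G$.
   Context: All graphs are simple. $t(G)$ denotes the number of triangles ($K_3$ subgraphs) in $G$. *)

theory Defs
  imports Complex_Main
begin

definition simple_graph :: "'a set \<Rightarrow> 'a set set \<Rightarrow> bool" where
  "simple_graph V E \<longleftrightarrow> finite V \<and> (\<forall>e\<in>E. e \<subseteq> V \<and> card e = 2)"

definition has_cycle :: "'a set \<Rightarrow> 'a set set \<Rightarrow> nat \<Rightarrow> bool" where
  "has_cycle V E l \<longleftrightarrow> (\<exists>v :: nat \<Rightarrow> 'a.
      inj_on v {..<l} \<and> v ` {..<l} \<subseteq> V \<and>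
      (\<forall>i<l. {v i, v (Suc i mod l)} \<in> E))"

definition triangles :: "'a set \<Rightarrow> 'a set set \<Rightarrow> 'a set set" where
  "triangles V E = {T. T \<subseteq> V \<and> card T = 3 \<and> (\<forall>x\<in>T. \<forall>y\<in>T. x \<noteq> y \<longrightarrow> {x, y} \<in> E)}"

end

theory Submission
  imports Defs
begin

fun pth :: "('a \<Rightarrow> 'a \<Rightarrow> bool) \<Rightarrow> 'a list \<Rightarrow> bool" where
  "pth A [] = True"
| "pth A [x] = True"
| "pth A (x # y # xs) = (A x y \<and> pth A (y # xs))"

lemma pth_Cons: "pth A (x # xs) = (pth A xs \<and> (xs \<noteq> [] \<longrightarrow> A x (hd xs)))"
  by (cases xs) auto

lemma pth_append: "pth A (xs @ ys) = (pth A xs \<and> pth A ys \<and> (xs \<noteq> [] \<longrightarrow> ys \<noteq> [] \<longrightarrow> A (last xs) (hd ys)))"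
  by (induction xs) (auto simp: pth_Cons)

lemma pth_rev: "(\<And>x y. A x y = A y x) \<Longrightarrow> pth A (rev xs) = pth A xs"
  by (induction xs) (auto simp: pth_append pth_Cons last_rev)

lemma pth_take: "pth A xs \<Longrightarrow> pth A (take n xs)"
  using pth_append[of A "take n xs" "drop n xs"] by simp

lemma pth_drop: "pth A xs \<Longrightarrow> pth A (drop n xs)"
  using pth_append[of A "take n xs" "drop n xs"] by simp

lemma pth_nth: "pth A xs \<Longrightarrow> Suc j < length xs \<Longrightarrow> A (xs!j) (xs!Suc j)"
proof (induction A xs arbitrary: j rule: pth.induct)
  case (3 A x y xs)
  then show ?case by (cases j) auto
qed auto

definition cyc :: "('a \<Rightarrow> 'a \<Rightarrow> bool) \<Rightarrow> 'a list \<Rightarrow> bool" where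
  "cyc A C = (pth A C \<and> (length C \<ge> 2 \<longrightarrow> A (last C) (hd C)))"

lemma cyc_rotate1: "cyc A C \<Longrightarrow> cyc A (rotate1 C)"
proof (cases C)
  case (Cons x xs)
  assume c: "cyc A C"
  show ?thesis
  proof (cases "xs = []")
    case True then show ?thesis using c Cons by simp
  next
    case False
    have p: "pth A xs" "A x (hd xs)" using c Cons False by (auto simp: cyc_def pth_Cons)
    have l: "A (last xs) x" using c Cons False by (auto simp: cyc_def Suc_le_eq)
    have "pth A (xs @ [x])" using p l False by (simp add: pth_append)
    moreover have "last (xs @ [x]) = x" "hd (xs @ [x]) = hd xs" using False by auto
    ultimately show ?thesis using Cons p by (simp add: cyc_def)
  qed
qed simp

lemma cyc_rotate: "cyc A C \<Longrightarrow> cyc A (rotate n C)"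
  by (induction n) (auto simp: cyc_rotate1)

lemma EG:
  fixes E :: "'a set set" and k :: nat and W :: "'a set"
  assumes E2: "\<forall>e\<in>E. card e = 2" and k: "k \<ge> 2" and fin: "finite W"
  and nop: "\<forall>xs. distinct xs \<and> set xs \<subseteq> W \<and> pth (\<lambda>x y. {x,y} \<in> E) xs \<longrightarrow> length xs < k"
  shows "2 * card {e\<in>E. e \<subseteq> W} \<le> (k - 2) * card W"
  using fin nop
proof (induction W rule: finite_psubset_induct)
  case (psubset W)
  define A where "A = (\<lambda>x y. {x,y} \<in> E)"
  have Asym: "A x y = A y x" for x y by (simp add: A_def insert_commute)
  have Airr: "\<not> A x x" for x using E2 by (auto simp: A_def)
  define eW where "eW U = {e\<in>E. e \<subseteq> U}" for U
  define deg where "deg U w = card {u\<in>U. A w u}" for U w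
  have finE: "finite (eW U)" if "finite U" for U
    using that by (rule finite_subset[rotated, OF finite_Pow_iff[THEN iffD2]]) (auto simp: eW_def)
  have split: "card (eW U) = card (eW (U - {w})) + deg U w" if "w \<in> U" "finite U" for U w
  proof -
    have u: "eW U = eW (U - {w}) \<union> {e\<in>eW U. w\<in>e}" by (auto simp: eW_def)
    have d: "eW (U - {w}) \<inter> {e\<in>eW U. w\<in>e} = {}" by (auto simp: eW_def)
    have im: "{e\<in>eW U. w\<in>e} = (\<lambda>u. {w,u}) ` {u\<in>U. A w u}"
    proof
      show "{e\<in>eW U. w\<in>e} \<subseteq> (\<lambda>u. {w,u}) ` {u\<in>U. A w u}"
      proof
        fix e assume "e \<in> {e\<in>eW U. w\<in>e}"
        then have e: "e \<in> E" "e \<subseteq> U" "w \<in> e" by (auto simp: eW_def)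
        then obtain a b where ab: "e = {a,b}" "a \<noteq> b" using E2 card_2_iff by metis
        then obtain u where "e = {w,u}" using e(3) by auto
        then show "e \<in> (\<lambda>u. {w,u}) ` {u\<in>U. A w u}" using e by (auto simp: A_def)
      qed
    next
      show "(\<lambda>u. {w,u}) ` {u\<in>U. A w u} \<subseteq> {e\<in>eW U. w\<in>e}"
        using that by (auto simp: eW_def A_def)
    qed
    have inj: "inj_on (\<lambda>u. {w,u}) {u\<in>U. A w u}"
      using Airr by (auto simp: inj_on_def doubleton_eq_iff)
    have "card (eW U) = card (eW (U - {w})) + card {e\<in>eW U. w\<in>e}"
      using u d finE that by (metis (no_types, lifting) card_Un_disjoint finite_Diff finite_Un)
    also have "card {e\<in>eW U. w\<in>e} = deg U w" using im inj card_image deg_def by metis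
    finally show ?thesis .
  qed
  have nopW: "\<And>xs. distinct xs \<Longrightarrow> set xs \<subseteq> W \<Longrightarrow> pth A xs \<Longrightarrow> length xs < k"
    using psubset.prems A_def by auto
  show ?case
  proof (cases "\<exists>w\<in>W. 2 * deg W w \<le> k - 2")
    case True
    then obtain w where w: "w \<in> W" "2 * deg W w \<le> k - 2" by auto
    have sub: "W - {w} \<subset> W" using w by auto
    have IH: "2 * card (eW (W - {w})) \<le> (k - 2) * card (W - {w})"
      using psubset.IH[OF sub] psubset.prems unfolding eW_def by blast
    have c: "card W = card (W - {w}) + 1" using w psubset.hyps
      by (metis card_Suc_Diff1 Suc_eq_plus1)
    have "2 * card (eW W) = 2 * card (eW (W - {w})) + 2 * deg W w"
      using split[OF w(1) psubset.hyps] by simp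
    also have "\<dots> \<le> (k - 2) * card (W - {w}) + (k - 2)" using IH w(2) by linarith
    also have "\<dots> = (k - 2) * card W" using c by (simp add: algebra_simps)
    finally show ?thesis unfolding eW_def .
  next
    case False
    then have big: "\<And>w. w \<in> W \<Longrightarrow> k - 1 \<le> 2 * deg W w" by force
    show ?thesis
    proof (cases "W = {}")
      case True
      have "eW W = {}" using True E2 by (auto simp: eW_def)
      then have "{e\<in>E. e \<subseteq> W} = {}" by (simp only: eW_def)
      then have "card {e\<in>E. e \<subseteq> W} = 0" by (metis card.empty)
      then show ?thesis by simp
    next
      case False
      then obtain w0 where w0: "w0 \<in> W" by auto
      define Pp where "Pp xs = (distinct xs \<and> set xs \<subseteq> W \<and> pth A xs \<and> xs \<noteq> [])" for xs
      have "Pp [w0]" using w0 by (simp add: Pp_def)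
      moreover have "\<forall>ys. Pp ys \<longrightarrow> length ys < k" using nopW by (auto simp: Pp_def)
      ultimately obtain P where P: "Pp P" and Pmax: "\<And>ys. Pp ys \<Longrightarrow> length ys \<le> length P"
        using ex_has_greatest_nat[of Pp "[w0]" length k] by blast
      have Pd: "distinct P" and PW: "set P \<subseteq> W" and Pp: "pth A P" and Pne: "P \<noteq> []"
        using P by (auto simp: Pp_def)
      have Pk: "length P < k" using nopW Pd PW Pp by blast
      define m where "m = length P - 1"
      have lenP: "length P = Suc m" using Pne m_def by (cases P) auto
      have x0: "P ! 0 = hd P" using Pne by (simp add: hd_conv_nth)
      have xm: "P ! m = last P" using Pne lenP by (simp add: last_conv_nth)
      have nb0: "u \<in> set P" if "u \<in> W" "A (hd P) u" for u
      proof (rule ccontr)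
        assume "u \<notin> set P"
        then have "Pp (u # P)" using that Pd PW Pp Pne Asym by (auto simp: Pp_def pth_Cons)
        then show False using Pmax[of "u # P"] by simp
      qed
      have nbm: "u \<in> set P" if "u \<in> W" "A (last P) u" for u
      proof (rule ccontr)
        assume "u \<notin> set P"
        then have "Pp (P @ [u])" using that Pd PW Pp Pne by (auto simp: Pp_def pth_append)
        then show False using Pmax[of "P @ [u]"] by simp
      qed
      define IA where "IA = {i. i < m \<and> A (hd P) (P ! Suc i)}"
      define IB where "IB = {i. i < m \<and> A (last P) (P ! i)}"
      have "{u\<in>W. A (hd P) u} \<subseteq> (\<lambda>i. P ! Suc i) ` IA"
      proof
        fix u assume u: "u \<in> {u\<in>W. A (hd P) u}"
        then have "u \<in> set P" using nb0 by auto
        then obtain j where j: "j < length P" "u = P ! j" by (auto simp: in_set_conv_nth)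
        have "j \<noteq> 0" using j u x0 Airr by (metis mem_Collect_eq)
        then obtain i where "j = Suc i" by (cases j) auto
        then show "u \<in> (\<lambda>i. P ! Suc i) ` IA" using j u lenP by (auto simp: IA_def)
      qed
      moreover have "finite IA" by (simp add: IA_def)
      ultimately have dA: "deg W (hd P) \<le> card IA"
        unfolding deg_def using card_mono[OF finite_imageI] card_image_le le_trans by metis
      have "{u\<in>W. A (last P) u} \<subseteq> (\<lambda>i. P ! i) ` IB"
      proof
        fix u assume u: "u \<in> {u\<in>W. A (last P) u}"
        then have "u \<in> set P" using nbm by auto
        then obtain j where j: "j < length P" "u = P ! j" by (auto simp: in_set_conv_nth)
        have "j \<noteq> m" using j u xm Airr by (metis mem_Collect_eq)
        then show "u \<in> (\<lambda>i. P ! i) ` IB" using j u lenP by (auto simp: IB_def)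
      qed
      moreover have "finite IB" by (simp add: IB_def)
      ultimately have dB: "deg W (last P) \<le> card IB"
        unfolding deg_def using card_mono[OF finite_imageI] card_image_le le_trans by metis
      have "hd P \<in> W" "last P \<in> W" using PW Pne by auto
      then have "k - 1 \<le> 2 * card IA" "k - 1 \<le> 2 * card IB" using big dA dB by (meson le_trans mult_le_mono2)+
      then have sumAB: "m < card IA + card IB" using Pk lenP by linarith
      have "IA \<inter> IB \<noteq> {}"
      proof
        assume "IA \<inter> IB = {}"
        then have "card (IA \<union> IB) = card IA + card IB"
          by (intro card_Un_disjoint) (auto simp: IA_def IB_def)
        moreover have "card (IA \<union> IB) \<le> m"
          using card_mono[of "{..<m}" "IA \<union> IB"] by (auto simp: IA_def IB_def)
        ultimately show False using sumAB by simp
      qed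
      then obtain i where i: "i < m" "A (hd P) (P ! Suc i)" "A (last P) (P ! i)"
        by (auto simp: IA_def IB_def)
      define C where "C = take (Suc i) P @ rev (drop (Suc i) P)"
      have setC: "set C = set P" unfolding C_def
        by (metis append_take_drop_id set_append set_rev)
      have distC: "distinct C" unfolding C_def using Pd
        by (metis append_take_drop_id distinct_append distinct_rev set_rev)
      have lenC: "length C = length P" unfolding C_def by simp
      have lt: "Suc i < length P" using i lenP by simp
      have lastt: "last (take (Suc i) P) = P ! i" using lt
        by (subst last_conv_nth) auto
      have hdt: "hd (take (Suc i) P) = hd P" using lt Pne by simp
      have dne: "drop (Suc i) P \<noteq> []" using lt by simp
      have pC: "pth A C" unfolding C_def using Pp dne lt lastt i(3) Asym
        by (simp add: pth_append pth_take pth_drop pth_rev hd_rev)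
      have lastC: "last C = P ! Suc i" unfolding C_def using dne lt
        by (simp add: last_rev hd_drop_conv_nth)
      have hdC: "hd C = hd P" unfolding C_def using hdt lt Pne by (simp add: hd_append2)
      have cC: "cyc A C" unfolding cyc_def using pC lastC hdC i(2) Asym by simp
      show ?thesis
      proof (cases "\<exists>y\<in>W - set P. \<exists>z\<in>set P. A y z")
        case True
        then obtain y z where y: "y \<in> W" "y \<notin> set P" and z: "z \<in> set P" "A y z" by auto
        then obtain j where j: "j < length C" "z = C ! j" using setC by (metis in_set_conv_nth)
        define R where "R = rotate j C"
        have Cne: "C \<noteq> []" using lenC Pne by auto
        have hR: "hd R = z" unfolding R_def using j Cne by (simp add: hd_rotate_conv_nth)
        have pR: "pth A R" using cyc_rotate[OF cC] unfolding R_def cyc_def by simp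
        have "Pp (y # R)" unfolding Pp_def R_def using y z hR pR distC setC PW Cne
          by (auto simp: pth_Cons R_def)
        then show ?thesis using Pmax[of "y # R"] lenC by (simp add: R_def)
      next
        case False
        define S where "S = set P"
        have SW: "S \<subseteq> W" using PW S_def by simp
        have "hd P \<in> S" using Pne S_def by simp
        then have sub: "W - S \<subset> W" using SW by blast
        have IH: "2 * card (eW (W - S)) \<le> (k - 2) * card (W - S)"
          using psubset.IH[OF sub] psubset.prems unfolding eW_def by blast
        have un: "eW W = eW S \<union> eW (W - S)"
        proof
          show "eW W \<subseteq> eW S \<union> eW (W - S)"
          proof
            fix e assume e: "e \<in> eW W"
            then obtain a b where ab: "e = {a,b}" "a \<noteq> b" "e \<in> E" "e \<subseteq> W"
              using E2 card_2_iff unfolding eW_def by (metis (no_types, lifting) mem_Collect_eq)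
            have "A a b" "A b a" using ab Asym by (auto simp: A_def)
            then have "(a \<in> S \<and> b \<in> S) \<or> (a \<notin> S \<and> b \<notin> S)" using False ab S_def by blast
            then show "e \<in> eW S \<union> eW (W - S)" using ab by (auto simp: eW_def)
          qed
        qed (use SW in \<open>auto simp: eW_def\<close>)
        have dj: "eW S \<inter> eW (W - S) = {}"
        proof (rule ccontr)
          assume "eW S \<inter> eW (W - S) \<noteq> {}"
          then obtain e where "e \<in> E" "e \<subseteq> S" "e \<subseteq> W - S" by (auto simp: eW_def)
          then have "e = {}" "card e = 2" using E2 by auto
          then show False by simp
        qed
        have finS: "finite S" by (simp add: S_def)
        have cS: "card S = Suc m" using Pd lenP distinct_card S_def by metis
        have sb: "eW S \<subseteq> {B. B \<subseteq> S \<and> card B = 2}" using E2 by (auto simp: eW_def)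
        have "finite {B. B \<subseteq> S \<and> card B = 2}" using finS by simp
        then have "card (eW S) \<le> card {B. B \<subseteq> S \<and> card B = 2}" using sb by (rule card_mono)
        then have "card (eW S) \<le> card S choose 2" using n_subsets[OF finS] by simp
        then have "2 * card (eW S) \<le> Suc m * m" using cS by (simp add: choose_two)
        also have "\<dots> \<le> (k - 2) * Suc m"
        proof -
          have "m \<le> k - 2" using Pk lenP by simp
          then show ?thesis by (metis mult.commute mult_le_mono1)
        qed
        finally have ES: "2 * card (eW S) \<le> (k - 2) * card S" using cS by simp
        have cW: "card W = card S + card (W - S)" using SW psubset.hyps
          by (metis card_Diff_subset finite_subset le_add_diff_inverse card_mono)
        have "card (eW W) = card (eW S) + card (eW (W - S))"
          using un dj finE psubset.hyps finS by (simp add: card_Un_disjoint)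
        then have "2 * card (eW W) \<le> (k - 2) * card S + (k - 2) * card (W - S)" using ES IH by linarith
        also have "\<dots> = (k - 2) * card W" using cW by (simp add: algebra_simps)
        finally show ?thesis unfolding eW_def .
      qed
    qed
  qed
qed

lemma swap_count:
  assumes "finite V" "finite F" "\<forall>X\<in>F. X \<subseteq> V"
  shows "(\<Sum>v\<in>V. card {X\<in>F. v\<in>X}) = (\<Sum>X\<in>F. card X)"
proof -
  have "(\<Sum>v\<in>V. card {X\<in>F. v\<in>X}) = (\<Sum>v\<in>V. \<Sum>X\<in>F. if v\<in>X then 1 else 0)"
  proof (intro sum.cong refl)
    fix v
    have "card {X\<in>F. v\<in>X} = (\<Sum>X\<in>{X\<in>F. v\<in>X}. 1)" by simp
    also have "\<dots> = (\<Sum>X\<in>F. if v\<in>X then 1 else 0)" using assms(2) by (rule sum.inter_filter)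
    finally show "card {X\<in>F. v\<in>X} = (\<Sum>X\<in>F. if v\<in>X then 1 else 0)" .
  qed
  also have "\<dots> = (\<Sum>X\<in>F. \<Sum>v\<in>V. if v\<in>X then 1 else 0)" by (rule sum.swap)
  also have "\<dots> = (\<Sum>X\<in>F. card X)"
  proof (intro sum.cong refl)
    fix X assume X: "X \<in> F"
    have "(\<Sum>v\<in>V. if v\<in>X then 1 else 0) = (\<Sum>v\<in>{v\<in>V. v\<in>X}. 1::nat)"
      using assms(1) by (rule sum.inter_filter[symmetric])
    also have "{v\<in>V. v\<in>X} = X" using X assms(3) by auto
    finally show "(\<Sum>v\<in>V. if v\<in>X then 1 else 0) = card X" by simp
  qed
  finally show ?thesis .
qed

theorem lemma3p1:
  fixes V :: "'a set" and E :: "'a set set" and l :: nat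
  assumes "simple_graph V E"
    and "l \<ge> 3"
    and "\<not> has_cycle V E l"
  shows "real (card (triangles V E)) \<le> (real l - 3) / 3 * real (card E)"
proof -
  have finV: "finite V" and EV: "\<And>e. e \<in> E \<Longrightarrow> e \<subseteq> V" and E2: "\<forall>e\<in>E. card e = 2"
    using assms(1) by (auto simp: simple_graph_def)
  have "E \<subseteq> Pow V" using EV by auto
  then have finE: "finite E" using finV by (simp add: finite_subset)
  have irr: "{x,x} \<notin> E" for x using E2 by auto
  define N where "N v = {u\<in>V. {v,u}\<in>E}" for v
  define tri where "tri = triangles V E"
  have "tri \<subseteq> Pow V" unfolding tri_def triangles_def by auto
  then have fintri: "finite tri" using finV by (simp add: finite_subset)
  have nop: "\<forall>xs. distinct xs \<and> set xs \<subseteq> N v \<and> pth (\<lambda>x y. {x,y} \<in> E) xs \<longrightarrow> length xs < l - 1"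
    if v: "v \<in> V" for v
  proof (intro allI impI, rule ccontr)
    fix xs assume xs: "distinct xs \<and> set xs \<subseteq> N v \<and> pth (\<lambda>x y. {x,y} \<in> E) xs"
      and "\<not> length xs < l - 1"
    define ys where "ys = take (l - 1) xs"
    have ly: "length ys = l - 1" using \<open>\<not> length xs < l - 1\<close> by (simp add: ys_def)
    have dy: "distinct ys" and sy: "set ys \<subseteq> N v" and py: "pth (\<lambda>x y. {x,y} \<in> E) ys"
      using xs set_take_subset[of "l-1" xs] by (auto simp: ys_def pth_take)
    have yN: "{v, ys ! j} \<in> E" "ys ! j \<in> V" if "j < l - 1" for j
    proof -
      have "ys ! j \<in> set ys" using ly that by simp
      then have "ys ! j \<in> N v" using sy by blast
      then show "{v, ys ! j} \<in> E" "ys ! j \<in> V" by (auto simp: N_def)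
    qed
    define f where "f i = (if i = 0 then v else ys ! (i - 1))" for i
    have "has_cycle V E l" unfolding has_cycle_def
    proof (intro exI conjI)
      show "inj_on f {..<l}"
      proof (rule inj_onI)
        fix i j assume ij: "i \<in> {..<l}" "j \<in> {..<l}" "f i = f j"
        show "i = j"
        proof (cases "i = 0"; cases "j = 0")
          assume "i = 0" "j \<noteq> 0"
          then have "v = ys ! (j - 1)" using ij by (simp add: f_def)
          moreover have "j - 1 < l - 1" using ij \<open>j \<noteq> 0\<close> by auto
          ultimately have "{v, v} \<in> E" using yN(1)[of "j-1"] by simp
          then show ?thesis using irr by blast
        next
          assume "i \<noteq> 0" "j = 0"
          then have "v = ys ! (i - 1)" using ij by (simp add: f_def)
          moreover have "i - 1 < l - 1" using ij \<open>i \<noteq> 0\<close> by auto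
          ultimately have "{v, v} \<in> E" using yN(1)[of "i-1"] by simp
          then show ?thesis using irr by blast
        next
          assume "i \<noteq> 0" "j \<noteq> 0"
          then have "ys ! (i - 1) = ys ! (j - 1)" using ij by (simp add: f_def)
          then have "i - 1 = j - 1" using dy ly ij \<open>i \<noteq> 0\<close> \<open>j \<noteq> 0\<close>
            by (simp add: nth_eq_iff_index_eq)
          then show ?thesis using \<open>i \<noteq> 0\<close> \<open>j \<noteq> 0\<close> by simp
        qed simp
      qed
      show "f ` {..<l} \<subseteq> V" using v yN(2) by (auto simp: f_def)
      show "\<forall>i<l. {f i, f (Suc i mod l)} \<in> E"
      proof (intro allI impI)
        fix i assume i: "i < l"
        consider "i = 0" | "0 < i \<and> Suc i < l" | "Suc i = l" using i by linarith
        then show "{f i, f (Suc i mod l)} \<in> E"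
        proof cases
          case 1
          then have "Suc i mod l = 1" using assms(2) by simp
          then show ?thesis using 1 yN(1)[of 0] assms(2) by (simp add: f_def)
        next
          case 2
          then have "Suc i mod l = Suc i" by simp
          moreover have "{ys ! (i - 1), ys ! i} \<in> E"
          proof -
            have "i < l - 1" using 2 by linarith
            then show ?thesis using pth_nth[OF py, of "i - 1"] 2 ly by simp
          qed
          ultimately show ?thesis using 2 by (simp add: f_def)
        next
          case 3
          then have "Suc i mod l = 0" by simp
          moreover have "{v, ys ! (i - 1)} \<in> E" using yN(1)[of "i - 1"] 3 assms(2) by simp
          ultimately show ?thesis using 3 assms(2) by (simp add: f_def insert_commute)
        qed
      qed
    qed
    then show False using assms(3) by simp
  qed
  have EGv: "2 * card {e\<in>E. e \<subseteq> N v} \<le> (l - 3) * card (N v)" if v: "v \<in> V" for v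
  proof -
    have "finite (N v)" using finV by (simp add: N_def)
    from EG[OF E2 _ this nop[OF v]] assms(2) show ?thesis by (simp add: numeral_eq_Suc)
  qed
  have degv: "card (N v) = card {e\<in>E. v\<in>e}" if v: "v \<in> V" for v
  proof -
    have im: "(\<lambda>u. {v,u}) ` N v = {e\<in>E. v\<in>e}"
    proof
      show "{e\<in>E. v\<in>e} \<subseteq> (\<lambda>u. {v,u}) ` N v"
      proof
        fix e assume e: "e \<in> {e\<in>E. v\<in>e}"
        then obtain a b where ab: "e = {a,b}" "a \<noteq> b" using E2 card_2_iff by (metis mem_Collect_eq)
        then obtain u where "e = {v,u}" using e by auto
        then show "e \<in> (\<lambda>u. {v,u}) ` N v" using e EV by (auto simp: N_def)
      qed
    qed (auto simp: N_def)
    have "inj_on (\<lambda>u. {v,u}) (N v)"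
      using irr by (auto simp: inj_on_def doubleton_eq_iff N_def)
    then show ?thesis using im card_image by metis
  qed
  have triv: "card {e\<in>E. e \<subseteq> N v} = card {T\<in>tri. v\<in>T}" if v: "v \<in> V" for v
  proof -
    have im: "insert v ` {e\<in>E. e \<subseteq> N v} = {T\<in>tri. v\<in>T}"
    proof
      show "insert v ` {e\<in>E. e \<subseteq> N v} \<subseteq> {T\<in>tri. v\<in>T}"
      proof
        fix T assume "T \<in> insert v ` {e\<in>E. e \<subseteq> N v}"
        then obtain e where e: "e \<in> E" "e \<subseteq> N v" "T = insert v e" by auto
        then obtain a b where ab: "e = {a,b}" "a \<noteq> b" using E2 card_2_iff by metis
        have a: "a \<in> V" "{v,a} \<in> E" and b: "b \<in> V" "{v,b} \<in> E" using e ab by (auto simp: N_def)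
        have "a \<noteq> v" "b \<noteq> v" using a b irr by auto
        then have c3: "card T = 3" using e ab by simp
        have "\<forall>x\<in>T. \<forall>y\<in>T. x \<noteq> y \<longrightarrow> {x, y} \<in> E"
          using e ab a b by (auto simp: insert_commute)
        then show "T \<in> {T\<in>tri. v\<in>T}" using c3 e ab a b v by (simp add: tri_def triangles_def)
      qed
    next
      show "{T\<in>tri. v\<in>T} \<subseteq> insert v ` {e\<in>E. e \<subseteq> N v}"
      proof
        fix T assume T: "T \<in> {T\<in>tri. v\<in>T}"
        then have TV: "T \<subseteq> V" and c3: "card T = 3" and vT: "v \<in> T"
          and ed: "\<forall>x\<in>T. \<forall>y\<in>T. x \<noteq> y \<longrightarrow> {x, y} \<in> E"
          by (auto simp: tri_def triangles_def)
        have "card (T - {v}) = 2" using c3 vT by (simp add: card_Diff_singleton_if)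
        then obtain a b where ab: "T - {v} = {a,b}" "a \<noteq> b" using card_2_iff by metis
        have "{a,b} \<in> E" using ed ab by (metis Diff_iff insertI1 insert_commute)
        moreover have "{a,b} \<subseteq> N v" using ab ed TV vT unfolding N_def by blast
        moreover have "T = insert v {a,b}" using ab vT by blast
        ultimately show "T \<in> insert v ` {e\<in>E. e \<subseteq> N v}" by blast
      qed
    qed
    have "inj_on (insert v) {e\<in>E. e \<subseteq> N v}"
    proof (rule inj_onI)
      fix e e' assume a: "e \<in> {e\<in>E. e \<subseteq> N v}" "e' \<in> {e\<in>E. e \<subseteq> N v}" "insert v e = insert v e'"
      have "v \<notin> N v" using irr by (simp add: N_def)
      then have "v \<notin> e" "v \<notin> e'" using a by auto
      then have "e = insert v e - {v}" "e' = insert v e' - {v}" by auto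
      then show "e = e'" using a(3) by simp
    qed
    then show ?thesis using im card_image by metis
  qed
  have s1: "(\<Sum>v\<in>V. card (N v)) = 2 * card E"
  proof -
    have "(\<Sum>v\<in>V. card (N v)) = (\<Sum>v\<in>V. card {e\<in>E. v\<in>e})" using degv by simp
    also have "\<dots> = (\<Sum>e\<in>E. card e)" using swap_count[OF finV finE] EV by blast
    also have "\<dots> = 2 * card E" using E2 by simp
    finally show ?thesis .
  qed
  have s2: "(\<Sum>v\<in>V. card {e\<in>E. e \<subseteq> N v}) = 3 * card tri"
  proof -
    have "(\<Sum>v\<in>V. card {e\<in>E. e \<subseteq> N v}) = (\<Sum>v\<in>V. card {T\<in>tri. v\<in>T})" using triv by simp
    also have "\<dots> = (\<Sum>T\<in>tri. card T)" using swap_count[OF finV fintri]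
      by (auto simp: tri_def triangles_def)
    also have "\<dots> = 3 * card tri" by (simp add: tri_def triangles_def)
    finally show ?thesis .
  qed
  have "2 * (3 * card tri) = (\<Sum>v\<in>V. 2 * card {e\<in>E. e \<subseteq> N v})"
    using s2 by (simp only: sum_distrib_left[symmetric])
  also have "\<dots> \<le> (\<Sum>v\<in>V. (l - 3) * card (N v))" using EGv by (rule sum_mono)
  also have "\<dots> = (l - 3) * (2 * card E)" using s1 by (simp only: sum_distrib_left[symmetric])
  finally have "3 * card tri \<le> (l - 3) * card E" by (simp add: mult.commute)
  then have "real (3 * card tri) \<le> real ((l - 3) * card E)" by (simp only: of_nat_le_iff)
  moreover have "real (l - 3) = real l - 3" using assms(2) by simp
  ultimately show ?thesis unfolding tri_def by (simp add: field_simps)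
qed

end
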